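(* For a tuple $\vec a=(a_1,\dots,a_{2i})$ of odd integers and a virtual character $\chi$ of $C_8$, set $$F_{4i+1}(\vec a)(\chi)=\frac18\sum_{1\ne\lambda\in C_8}\frac{\lambda^{(a_1+\cdots+a_{2i})/2}(1+\lambda^{a_1})}{(1-\lambda^{a_1})^2(1-\lambda^{a_2})\cdots(1-\lambda^{a_{2i}})}\,\chi(\lambda).$$ Then $F_5((1,1))(2\rho_0-\rho_1-\rho_3)$ has order $2$ in $\mathbb{R}/\mathbb{Z}$ and $F_{13}((1,1,1,1,1,1))(2\rho_0-\rho_1-\rho_3)$ has order $4$ in $\mathbb{R}/\mathbb{Z}$.
   Context: $C_8=\{\lambda\in S^1:\lambda^8=1\}$, $\rho_a(\lambda)=\lambda^a$, $\rho_0$ trivial. $F_{4i+1}(\vec a)(\rho)$ equals the eta invariant of $X^{4i+1}(8,\vec a)-X^{4i+1}_0(8,\vec a)$ twisted by $\rho$, where $X^{4i+1}(8,\vec a)=S(H\otimes H\oplus(2i-1)\mathbb{C}\to S^2)/C_8$ with $H$ the Hopf line bundle over $S^2$ and $C_8$ acting fibrewise via $\rho_{a_1}\oplus\cdots\oplus\rho_{a_{2i}}$. The virtual representation $2\rho_0-\rho_1-\rho_3$ is the restriction to $\langle s\rangle\cong C_8$ of $2-\chi_\rho$ for the 2-dimensional representation $\chi_\rho$ of $SD_{16}$. *)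

theory Defs
  imports Complex_Main
begin

definition C8 :: "complex set" where
  "C8 = {z. z ^ 8 = 1}"

definition rho :: "int \<Rightarrow> complex \<Rightarrow> complex" where
  "rho k z = z powi k"

definition F :: "int list \<Rightarrow> (complex \<Rightarrow> complex) \<Rightarrow> complex" where
  "F a chi = (1/8) * (\<Sum>z\<in>C8 - {1}.
      (z powi (sum_list a div 2) * (1 + z powi (a ! 0))) /
      ((1 - z powi (a ! 0))^2 * (\<Prod>j\<in>{1..<length a}. (1 - z powi (a ! j)))) * chi z)"

definition has_order_RZ :: "real \<Rightarrow> nat \<Rightarrow> bool" where
  "has_order_RZ x n \<longleftrightarrow> 0 < n \<and> real n * x \<in> \<int> \<and>
     (\<forall>m. 0 < m \<and> m < n \<longrightarrow> real m * x \<notin> \<int>)"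

end

theory Submission imports Defs begin
lemma finC8: "finite C8" unfolding C8_def by (rule finite_roots_unity) simp

lemma powsum: assumes "0 < m" "m < (8::nat)" shows "(\<Sum>z\<in>C8. z ^ m) = 0"
proof -
  define w where "w = cis (2 * pi * real m / 8)"
  have w1: "w \<noteq> 1"
  proof
    assume "w = 1"
    then have "cos (2 * pi * real m / 8) = 1" by (auto simp: w_def complex_eq_iff)
    then obtain j :: int where "2 * pi * real m / 8 = j * 2 * pi" by (auto simp: cos_one_2pi_int)
    then have "real m = 8 * j" by (simp add: field_simps)
    then have "int m = 8 * j" by linarith
    with assms show False by presburger
  qed
  have "(\<Sum>z\<in>C8. z ^ m) = (\<Sum>k<8. cis (2 * pi * real k / real 8) ^ m)"
    unfolding C8_def
    by (intro sum.reindex_bij_betw [symmetric] bij_betw_roots_unity) auto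
  also have "\<dots> = (\<Sum>k<8. w ^ k)"
    by (intro sum.cong refl) (simp add: w_def DeMoivre mult_ac)
  also have "\<dots> = (w ^ 8 - 1) / (w - 1)"
    using w1 by (subst geometric_sum) auto
  also have "w ^ 8 = cis (2 * pi) ^ m" by (simp add: w_def DeMoivre mult_ac)
  also have "cis (2 * pi) = 1" by (simp add: complex_eq_iff)
  finally show ?thesis by simp
qed

lemma sumC8: fixes c :: "nat \<Rightarrow> complex" shows "(\<Sum>z\<in>C8 - {1}. (\<Sum>k<8. c k * z ^ k)) = 8 * c 0 - (\<Sum>k<8. c k)"
proof -
  have one: "(1::complex) \<in> C8" by (simp add: C8_def)
  have "(\<Sum>z\<in>C8. (\<Sum>k<8. c k * z ^ k)) = (\<Sum>k<8. c k * (\<Sum>z\<in>C8. z ^ k))"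
    by (simp add: sum.swap [of _ C8] sum_distrib_left)
  also have "\<dots> = (\<Sum>k<8. if (k::nat) = 0 then 8 * c 0 else 0)"
  proof (intro sum.cong refl)
    fix k assume "k \<in> {..<(8::nat)}"
    then show "c k * (\<Sum>z\<in>C8. z ^ k) = (if k = 0 then 8 * c 0 else 0)"
      using powsum[of k] card_roots_unity_eq[of 8] by (auto simp: C8_def)
  qed
  also have "\<dots> = 8 * c 0" by (simp add: sum.delta)
  finally have h: "(\<Sum>z\<in>C8. (\<Sum>k<8. c k * z ^ k)) = 8 * c 0" .
  show ?thesis unfolding sum_diff1[OF finC8] using one h by simp
qed


definition c1 :: "nat \<Rightarrow> complex" where "c1 k = ([-(3/2), -(11/4), -2, -(1/4), (3/2), (9/4), 2, (3/4)] :: complex list) ! k"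

lemma t1:
  assumes z: "z \<in> C8 - {1}"
  shows "(z powi (sum_list [1,1::int] div 2) * (1 + z powi ([1,1::int] ! 0))) /
      ((1 - z powi ([1,1::int] ! 0))^2 * (\<Prod>j\<in>{1..<length [1,1::int]}. (1 - z powi ([1,1::int] ! j)))) *
      (2 * rho 0 z - rho 1 z - rho 3 z) = (\<Sum>k<8. c1 k * z ^ k)"
proof -
  have z8: "z ^ 8 = 1" and z1: "z \<noteq> 1" using z by (auto simp: C8_def)
  have "(z - 1) * (1 + z + z^2 + z^3 + z^4 + z^5 + z^6 + z^7) = z ^ 8 - 1" by algebra
  with z8 z1 have phi: "1 + z + z^2 + z^3 + z^4 + z^5 + z^6 + z^7 = 0" by simp
  have d: "(1 - z) ^ 3 \<noteq> 0" using z1 by simp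
  have id: "z ^ 1 * (1 + z) * (2 - z - z ^ 3) = (- (3/2) - (11/4) * z ^ 1 - 2 * z ^ 2 - (1/4) * z ^ 3 + (3/2) * z ^ 4 + (9/4) * z ^ 5 + 2 * z ^ 6 + (3/4) * z ^ 7) * (1 - z) ^ 3 + ((3/2) - (5/4) * z ^ 1 - 1 * z ^ 2 + (3/4) * z ^ 3) * (1 + z + z^2 + z^3 + z^4 + z^5 + z^6 + z^7)"
    by algebra
  have lhs: "(z powi (sum_list [1,1::int] div 2) * (1 + z powi ([1,1::int] ! 0))) /
      ((1 - z powi ([1,1::int] ! 0))^2 * (\<Prod>j\<in>{1..<length [1,1::int]}. (1 - z powi ([1,1::int] ! j)))) *
      (2 * rho 0 z - rho 1 z - rho 3 z) = z ^ 1 * (1 + z) * (2 - z - z ^ 3) / (1 - z) ^ 3"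
    by (simp add: rho_def power_int_def numeral_eq_Suc atLeastLessThanSuc power_Suc)
  have rhs: "(\<Sum>k<8. c1 k * z ^ k) = (- (3/2) - (11/4) * z ^ 1 - 2 * z ^ 2 - (1/4) * z ^ 3 + (3/2) * z ^ 4 + (9/4) * z ^ 5 + 2 * z ^ 6 + (3/4) * z ^ 7)"
    by (simp add: c1_def eval_nat_numeral)
  show ?thesis unfolding lhs rhs using d id phi by (simp add: divide_eq_eq)
qed

lemma F1: "F [1,1::int] (\<lambda>z. 2 * rho 0 z - rho 1 z - rho 3 z) = (-(3/2))"
proof -
  have "F [1,1::int] (\<lambda>z. 2 * rho 0 z - rho 1 z - rho 3 z) = (1/8) * (\<Sum>z\<in>C8 - {1}. (\<Sum>k<8. c1 k * z ^ k))"
    unfolding F_def using t1 by (intro arg_cong[where f="\<lambda>x. (1/8) * x"] sum.cong) auto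
  also have "\<dots> = (1/8) * (8 * c1 0 - (\<Sum>k<8. c1 k))" by (simp add: sumC8)
  also have "\<dots> = (-(3/2))" by (simp add: c1_def eval_nat_numeral)
  finally show ?thesis .
qed

definition c2 :: "nat \<Rightarrow> complex" where "c2 k = ([-(17/4), -(117/16), -6, -(19/16), (17/4), (115/16), 6, (21/16)] :: complex list) ! k"

lemma t2:
  assumes z: "z \<in> C8 - {1}"
  shows "(z powi (sum_list [1,1,1,1,1,1::int] div 2) * (1 + z powi ([1,1,1,1,1,1::int] ! 0))) /
      ((1 - z powi ([1,1,1,1,1,1::int] ! 0))^2 * (\<Prod>j\<in>{1..<length [1,1,1,1,1,1::int]}. (1 - z powi ([1,1,1,1,1,1::int] ! j)))) *
      (2 * rho 0 z - rho 1 z - rho 3 z) = (\<Sum>k<8. c2 k * z ^ k)"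
proof -
  have z8: "z ^ 8 = 1" and z1: "z \<noteq> 1" using z by (auto simp: C8_def)
  have "(z - 1) * (1 + z + z^2 + z^3 + z^4 + z^5 + z^6 + z^7) = z ^ 8 - 1" by algebra
  with z8 z1 have phi: "1 + z + z^2 + z^3 + z^4 + z^5 + z^6 + z^7 = 0" by simp
  have d: "(1 - z) ^ 7 \<noteq> 0" using z1 by simp
  have id: "z ^ 3 * (1 + z) * (2 - z - z ^ 3) = (- (17/4) - (117/16) * z ^ 1 - 6 * z ^ 2 - (19/16) * z ^ 3 + (17/4) * z ^ 4 + (115/16) * z ^ 5 + 6 * z ^ 6 + (21/16) * z ^ 7) * (1 - z) ^ 7 + ((17/4) - (427/16) * z ^ 1 + (133/2) * z ^ 2 - (1249/16) * z ^ 3 + (165/4) * z ^ 4 - (65/16) * z ^ 5 - (9/2) * z ^ 6 + (21/16) * z ^ 7) * (1 + z + z^2 + z^3 + z^4 + z^5 + z^6 + z^7)"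
    by algebra
  have lhs: "(z powi (sum_list [1,1,1,1,1,1::int] div 2) * (1 + z powi ([1,1,1,1,1,1::int] ! 0))) /
      ((1 - z powi ([1,1,1,1,1,1::int] ! 0))^2 * (\<Prod>j\<in>{1..<length [1,1,1,1,1,1::int]}. (1 - z powi ([1,1,1,1,1,1::int] ! j)))) *
      (2 * rho 0 z - rho 1 z - rho 3 z) = z ^ 3 * (1 + z) * (2 - z - z ^ 3) / (1 - z) ^ 7"
    by (simp add: rho_def power_int_def numeral_eq_Suc atLeastLessThanSuc power_Suc)
  have rhs: "(\<Sum>k<8. c2 k * z ^ k) = (- (17/4) - (117/16) * z ^ 1 - 6 * z ^ 2 - (19/16) * z ^ 3 + (17/4) * z ^ 4 + (115/16) * z ^ 5 + 6 * z ^ 6 + (21/16) * z ^ 7)"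
    by (simp add: c2_def eval_nat_numeral)
  show ?thesis unfolding lhs rhs using d id phi by (simp add: divide_eq_eq)
qed

lemma F2: "F [1,1,1,1,1,1::int] (\<lambda>z. 2 * rho 0 z - rho 1 z - rho 3 z) = (-(17/4))"
proof -
  have "F [1,1,1,1,1,1::int] (\<lambda>z. 2 * rho 0 z - rho 1 z - rho 3 z) = (1/8) * (\<Sum>z\<in>C8 - {1}. (\<Sum>k<8. c2 k * z ^ k))"
    unfolding F_def using t2 by (intro arg_cong[where f="\<lambda>x. (1/8) * x"] sum.cong) auto
  also have "\<dots> = (1/8) * (8 * c2 0 - (\<Sum>k<8. c2 k))" by (simp add: sumC8)
  also have "\<dots> = (-(17/4))" by (simp add: c2_def eval_nat_numeral)
  finally show ?thesis .
qed

lemma notint: "(of_int a :: real) / of_int b \<notin> \<int>" if "b > 0" "\<not> b dvd a"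
proof
  assume "of_int a / of_int b \<in> (\<int> :: real set)"
  then obtain n where "(of_int a :: real) / of_int b = of_int n" by (auto elim: Ints_cases)
  then have "(of_int a :: real) = of_int (n * b)" using that by (simp add: field_simps)
  then have "a = n * b" by linarith
  with that show False by simp
qed

theorem mainTheorem7:
  shows "F [1,1] (\<lambda>z. 2 * rho 0 z - rho 1 z - rho 3 z) \<in> \<real> \<and>
    has_order_RZ (Re (F [1,1] (\<lambda>z. 2 * rho 0 z - rho 1 z - rho 3 z))) 2 \<and>
    F [1,1,1,1,1,1] (\<lambda>z. 2 * rho 0 z - rho 1 z - rho 3 z) \<in> \<real> \<and>
    has_order_RZ (Re (F [1,1,1,1,1,1] (\<lambda>z. 2 * rho 0 z - rho 1 z - rho 3 z))) 4"
proof -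
  have a: "\<forall>m. 0 < m \<and> m < (2::nat) \<longrightarrow> real m * (-(3/2)) \<notin> \<int>"
  proof (intro allI impI)
    fix m :: nat assume "0 < m \<and> m < 2"
    then have "m = 1" by auto
    then show "real m * (-(3/2)) \<notin> \<int>" using notint[of 2 "-3"] by simp
  qed
  have b: "\<forall>m. 0 < m \<and> m < (4::nat) \<longrightarrow> real m * (-(17/4)) \<notin> \<int>"
  proof (intro allI impI)
    fix m :: nat assume "0 < m \<and> m < 4"
    then have "m = 1 \<or> m = 2 \<or> m = 3" by auto
    then show "real m * (-(17/4)) \<notin> \<int>"
      using notint[of 4 "-17"] notint[of 2 "-17"] notint[of 4 "-51"] by auto
  qed
  have i1: "2 * (-(3/2)::real) \<in> \<int>" by simp
  have i2: "4 * (-(17/4)::real) \<in> \<int>" by simp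
  show ?thesis using F1 F2 a b i1 i2 unfolding has_order_RZ_def by simp
qed

end
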